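(* Let $d\ge 1$ and let $p(x,y)$ be a nonzero real binary form of degree $d$ having exactly $\tau$ real linear factors, counted with multiplicity. Suppose $$p(x,y)=\sum_{k=1}^r \lambda_k(\cos\theta_k\, x-\sin\theta_k\, y)^d,$$ where $r\ge 2$, $-\tfrac{\pi}{2}<\theta_1<\theta_2<\dots<\theta_r\le\tfrac{\pi}{2}$, and all $\lambda_k$ are nonzero real numbers. Let $\sigma$ be the number of sign changes in the sequence $(\lambda_1,\lambda_2,\dots,\lambda_r,(-1)^d\lambda_1)$. Then $\tau\le\sigma$. *)

theory Defs
  imports Complex_Main
begin

definition binform :: "nat \<Rightarrow> (nat \<Rightarrow> real) \<Rightarrow> real \<Rightarrow> real \<Rightarrow> real" where
  "binform d c = (\<lambda>x y. \<Sum>i\<le>d. c i * x ^ i * y ^ (d - i))"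

definition is_binary_form :: "nat \<Rightarrow> (real \<Rightarrow> real \<Rightarrow> real) \<Rightarrow> bool" where
  "is_binary_form d f \<longleftrightarrow> (\<exists>c. f = binform d c)"

definition has_lin_factors :: "nat \<Rightarrow> (real \<Rightarrow> real \<Rightarrow> real) \<Rightarrow> nat \<Rightarrow> bool" where
  "has_lin_factors d p k \<longleftrightarrow> k \<le> d \<and>
     (\<exists>(a::nat \<Rightarrow> real) (b::nat \<Rightarrow> real) g.
        (\<forall>i<k. a i \<noteq> 0 \<or> b i \<noteq> 0) \<and> is_binary_form (d - k) g \<and>
        (\<forall>x y. p x y = (\<Prod>i<k. a i * x + b i * y) * g x y))"

definition num_real_lin_factors :: "nat \<Rightarrow> (real \<Rightarrow> real \<Rightarrow> real) \<Rightarrow> nat" where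
  "num_real_lin_factors d p = (GREATEST k. has_lin_factors d p k)"

definition sign_changes :: "real list \<Rightarrow> nat" where
  "sign_changes xs = (let ys = filter (\<lambda>x. x \<noteq> 0) xs in
     card {i. Suc i < length ys \<and> ys ! i * ys ! Suc i < 0})"

end

theory Submission
  imports Defs "HOL-Computational_Algebra.Polynomial"
begin

definition Z :: "real poly \<Rightarrow> nat" where
  "Z f = (\<Sum>x | poly f x = 0. order x f)"

definition Zinf :: "nat \<Rightarrow> real poly \<Rightarrow> nat" where
  "Zinf n f = Z f + (n - degree f)"

lemma Z_le_degree: "f \<noteq> 0 \<Longrightarrow> Z f \<le> degree f"
  unfolding Z_def by (rule sum_order_le_degree)

lemma Z_sum_superset:
  assumes "f \<noteq> 0" "finite A" "{x. poly f x = 0} \<subseteq> A"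
  shows "Z f = (\<Sum>x\<in>A. order x f)"
  unfolding Z_def
  by (rule sum.mono_neutral_left) (use assms in \<open>auto simp: order_root\<close>)

lemma Z_mult:
  assumes "p \<noteq> 0" "q \<noteq> 0"
  shows "Z (p * q) = Z p + Z q"
proof -
  let ?A = "{x. poly p x = 0} \<union> {x. poly q x = 0}"
  have fin: "finite ?A" using assms poly_roots_finite by auto
  have "Z (p*q) = (\<Sum>x\<in>?A. order x (p*q))"
    by (rule Z_sum_superset) (use assms fin in auto)
  also have "\<dots> = (\<Sum>x\<in>?A. order x p) + (\<Sum>x\<in>?A. order x q)"
    using assms by (simp add: order_mult sum.distrib)
  also have "(\<Sum>x\<in>?A. order x p) = Z p"
    by (rule Z_sum_superset[symmetric]) (use assms fin in auto)
  also have "(\<Sum>x\<in>?A. order x q) = Z q"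
    by (rule Z_sum_superset[symmetric]) (use assms fin in auto)
  finally show ?thesis .
qed

lemma Z_const: "Z [:c:] = 0"
  unfolding Z_def by (cases "c = 0") (auto simp: infinite_UNIV_char_0)

lemma Z_smult: "c \<noteq> 0 \<Longrightarrow> Z (smult c f) = Z f"
  unfolding Z_def by (simp add: order_smult)

lemma Z_uminus: "Z (- f) = Z f"
  unfolding Z_def by simp

lemma Z_linear:
  assumes "a \<noteq> 0"
  shows "Z [:b, a:] = 1"
proof -
  have eq: "[:b, a:] = smult a [:- (-b/a), 1:]" using assms by simp
  have r: "{x. poly [:b, a:] x = 0} = {-b/a}" using assms by (auto simp: field_simps)
  have "order (-b/a) [:b, a:] = 1"
    by (subst eq, subst order_smult[OF assms]) (metis order_power_n_n power_one_right)
  then show ?thesis unfolding Z_def r by simp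
qed

lemma Z_lin: "L \<noteq> 0 \<Longrightarrow> degree L \<le> 1 \<Longrightarrow> Z L = degree L"
proof -
  assume L: "L \<noteq> 0" "degree L \<le> 1"
  obtain b a where Lba: "L = [:b, a:]"
  proof
    show "L = [:coeff L 0, coeff L 1:]"
    proof (rule poly_eqI)
      fix n show "coeff L n = coeff [:coeff L 0, coeff L 1:] n"
        using L(2) by (cases n; cases "n - 1") (auto simp: coeff_pCons intro!: coeff_eq_0)
    qed
  qed
  show ?thesis
  proof (cases "a = 0")
    case True then show ?thesis using Lba by (simp add: Z_const)
  next
    case False then show ?thesis using Lba Z_linear by simp
  qed
qed

lemma Z_prod_lin:
  assumes "\<And>i. i < K \<Longrightarrow> L i \<noteq> 0 \<and> degree (L i) \<le> 1"
  shows "Z (\<Prod>i<K. L i) = degree (\<Prod>i<K. L i) \<and> (\<Prod>i<K. L i) \<noteq> 0 \<and> degree (\<Prod>i<K. L i) \<le> K"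
  using assms
proof (induction K)
  case 0 then show ?case by (simp add: Z_def)
next
  case (Suc K)
  then have ih: "Z (\<Prod>i<K. L i) = degree (\<Prod>i<K. L i)" "(\<Prod>i<K. L i) \<noteq> 0" "degree (\<Prod>i<K. L i) \<le> K"
    by auto
  have LK: "L K \<noteq> 0" "degree (L K) \<le> 1" using Suc.prems by auto
  show ?case using ih LK
    by (simp add: Z_mult Z_lin degree_mult_eq)
qed

lemma FL_le:
  assumes "f \<noteq> 0" "f = (\<Prod>i<K. L i) * g" "\<And>i. i < K \<Longrightarrow> L i \<noteq> 0 \<and> degree (L i) \<le> 1"
    "degree g \<le> n - K" "K \<le> n"
  shows "K \<le> Zinf n f"
proof -
  note P = Z_prod_lin[of K L, OF assms(3)]
  have g0: "g \<noteq> 0" using assms by auto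
  have "Z f = degree (\<Prod>i<K. L i) + Z g" using assms(2) P g0 by (simp add: Z_mult)
  moreover have "degree f = degree (\<Prod>i<K. L i) + degree g" using assms(2) P g0 by (simp add: degree_mult_eq)
  ultimately show ?thesis using assms(4,5) unfolding Zinf_def by linarith
qed



lemma prod_lessThan_add: "(\<Prod>i<m + K. h i) = (\<Prod>i<m. h i) * (\<Prod>i<K. h (m + i))"
  for h :: "nat \<Rightarrow> 'a::comm_monoid_mult"
  by (induction K) (simp_all add: mult.assoc)

lemma Z_lin_power: "Z ([:-x, 1:] ^ m) = m"
proof -
  have "[:-x, 1:] ^ m = (\<Prod>i<m. [:-x, 1:])" by simp
  moreover have "Z (\<Prod>i<m. [:-x, 1:]) = degree (\<Prod>i<m. [:-x, 1:])"
    using Z_prod_lin[of m "\<lambda>i. [:-x,1:]"] by simp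
  ultimately show ?thesis by (simp add: degree_power_eq)
qed

lemma FL_roots:
  fixes f :: "real poly"
  shows "f \<noteq> 0 \<Longrightarrow> \<exists>\<rho> g. f = (\<Prod>i<Z f. [:-\<rho> i, 1:]) * g"
proof (induction f rule: poly_root_order_induct)
  case 0 then show ?case by simp
next
  case (no_roots p)
  then have "Z p = 0" unfolding Z_def by simp
  then show ?case by auto
next
  case (root p x m)
  have p0: "p \<noteq> 0" using root.prems by auto
  then obtain \<rho> g where pg: "p = (\<Prod>i<Z p. [:-\<rho> i, 1:]) * g" using root.IH by auto
  have Zq: "Z ([:-x, 1:] ^ m * p) = m + Z p"
    using p0 by (simp add: Z_mult Z_lin_power)
  define \<rho>' where "\<rho>' = (\<lambda>i. if i < m then x else \<rho> (i - m))"
  have "(\<Prod>i<m + Z p. [:-\<rho>' i, 1:]) = (\<Prod>i<m. [:-\<rho>' i, 1:]) * (\<Prod>i<Z p. [:-\<rho>' (m+i), 1:])"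
    by (rule prod_lessThan_add)
  also have "(\<Prod>i<m. [:-\<rho>' i, 1:]) = [:-x, 1:] ^ m" by (simp add: \<rho>'_def)
  also have "(\<Prod>i<Z p. [:-\<rho>' (m+i), 1:]) = (\<Prod>i<Z p. [:-\<rho> i, 1:])" by (simp add: \<rho>'_def)
  finally show ?case using pg Zq by (metis mult.assoc)
qed

lemma FL_Zinf:
  fixes f :: "real poly"
  assumes "f \<noteq> 0" "degree f \<le> n"
  shows "\<exists>L g. (\<forall>i<Zinf n f. L i \<noteq> 0 \<and> degree (L i) \<le> 1) \<and> degree g \<le> n - Zinf n f \<and>
            f = (\<Prod>i<Zinf n f. L i) * g"
proof -
  obtain \<rho> g where fg: "f = (\<Prod>i<Z f. [:-\<rho> i, 1:]) * g" using FL_roots assms by blast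
  define L where "L = (\<lambda>i. if i < Z f then [:-\<rho> i, 1:] else 1)"
  have "(\<Prod>i<Zinf n f. L i) = (\<Prod>i<Z f. L i) * (\<Prod>i<n - degree f. L (Z f + i))"
    unfolding Zinf_def by (rule prod_lessThan_add)
  also have "\<dots> = (\<Prod>i<Z f. [:-\<rho> i, 1:])" by (simp add: L_def)
  finally have pe: "(\<Prod>i<Zinf n f. L i) = (\<Prod>i<Z f. [:-\<rho> i, 1:])" .
  have g0: "g \<noteq> 0" using fg assms by auto
  have dP: "degree (\<Prod>i<Z f. [:-\<rho> i, 1:]) = Z f"
    by (simp add: degree_prod_eq_sum_degree)
  have P0: "(\<Prod>i<Z f. [:-\<rho> i, 1:]) \<noteq> 0" using fg assms by auto
  have "degree f = Z f + degree g" using fg g0 dP P0 by (metis degree_mult_eq)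
  then have "degree g \<le> n - Zinf n f" using assms(2) unfolding Zinf_def by linarith
  moreover have "\<forall>i<Zinf n f. L i \<noteq> 0 \<and> degree (L i) \<le> 1" by (simp add: L_def)
  ultimately show ?thesis using pe fg by metis
qed

lemma odd_degree_root:
  fixes f :: "real poly"
  assumes "odd (degree f)"
  shows "\<exists>x. poly f x = 0"
proof -
  have main: "\<exists>x. poly f x = 0" if lc: "lead_coeff f > 0" "odd (degree f)" for f :: "real poly"
  proof -
    obtain N where N: "\<forall>x\<ge>N. poly f x \<ge> lead_coeff f" using poly_pinfty_gt_lc[OF lc(1)] by auto
    define g where "g = - pcompose f [:0, -1:]"
    have "lead_coeff (pcompose f [:0, -1:]) = lead_coeff f * (-1) ^ degree f"
      by (subst lead_coeff_comp) auto
    then have lg: "lead_coeff g > 0" using lc by (simp add: g_def)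
    obtain M where M: "\<forall>x\<ge>M. poly g x \<ge> lead_coeff g" using poly_pinfty_gt_lc[OF lg] by auto
    define b where "b = max N (max M 0) + 1"
    have fb: "poly f b > 0" using N lc by (smt (verit) b_def)
    have "poly g b > 0" using M lg by (smt (verit) b_def)
    then have fmb: "poly f (-b) < 0" by (simp add: g_def poly_pcompose)
    have "-b < b" using b_def by simp
    from poly_IVT[OF this] fb fmb show ?thesis by (metis mult_neg_pos)
  qed
  show ?thesis
  proof (cases "lead_coeff f > 0")
    case True then show ?thesis using main assms by blast
  next
    case False
    have "f \<noteq> 0" using assms by auto
    then have "lead_coeff (-f) > 0" using False by (simp add: less_le)
    then obtain x where "poly (-f) x = 0" using main assms by (metis degree_minus)
    then show ?thesis by auto
  qed
qed

lemma Z_parity: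
  fixes f :: "real poly"
  shows "f \<noteq> 0 \<Longrightarrow> even (Z f + degree f)"
proof (induction f rule: poly_root_order_induct)
  case 0 then show ?case by simp
next
  case (no_roots p)
  then have "Z p = 0" unfolding Z_def by simp
  moreover have "even (degree p)" using odd_degree_root no_roots by blast
  ultimately show ?case by simp
next
  case (root p x m)
  have p0: "p \<noteq> 0" using root.prems by auto
  have "Z ([:-x, 1:] ^ m * p) = m + Z p" using p0 by (simp add: Z_mult Z_lin_power)
  moreover have "degree ([:-x, 1:] ^ m * p) = m + degree p"
    using p0 by (simp add: degree_mult_eq degree_power_eq)
  ultimately show ?case using root.IH p0 by simp
qed

lemma Zinf_parity:
  "f \<noteq> 0 \<Longrightarrow> degree f \<le> n \<Longrightarrow> even (Zinf n f + n)"
  using Z_parity[of f] unfolding Zinf_def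
  by (metis add.commute add.left_commute dvd_add_right_iff even_add le_add_diff_inverse)

lemma Zinf_le: "f \<noteq> 0 \<Longrightarrow> degree f \<le> n \<Longrightarrow> Zinf n f \<le> n"
  using Z_le_degree[of f] unfolding Zinf_def by linarith

lemma rolle_poly:
  fixes f :: "real poly"
  assumes "a < b" "poly f a = 0" "poly f b = 0"
  shows "\<exists>y. a < y \<and> y < b \<and> poly (pderiv f) y = 0"
  using poly_MVT[OF assms(1), of f] assms by auto

lemma rolle_set:
  fixes f :: "real poly"
  assumes "finite R"
  shows "R \<noteq> {} \<Longrightarrow> (\<forall>x\<in>R. poly f x = 0) \<Longrightarrow>
    \<exists>Y. finite Y \<and> Y \<inter> R = {} \<and> card R \<le> card Y + 1 \<and> (\<forall>y\<in>Y. poly (pderiv f) y = 0 \<and> y < Max R)"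
  using assms
proof (induction R rule: finite_linorder_max_induct)
  case empty then show ?case by simp
next
  case (insert M A)
  show ?case
  proof (cases "A = {}")
    case True then show ?thesis by (intro exI[of _ "{}"]) auto
  next
    case False
    obtain Y where Y: "finite Y" "Y \<inter> A = {}" "card A \<le> card Y + 1"
      "\<forall>y\<in>Y. poly (pderiv f) y = 0 \<and> y < Max A"
      using insert False by auto
    have MA: "Max A < M" "Max A \<in> A" using insert False by auto
    obtain y where y: "Max A < y" "y < M" "poly (pderiv f) y = 0"
      using rolle_poly[OF MA(1), of f] insert MA by auto
    have Mx: "Max (insert M A) = M" using MA(1) False insert.hyps(1) by (simp add: Max_insert)
    have yY: "y \<notin> Y" using Y(4) y by auto
    have yA: "y \<notin> A" using y insert.hyps Max_ge by fastforce
    have "card (insert M A) = card A + 1" using insert by auto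
    moreover have "card (insert y Y) = card Y + 1" using yY Y by auto
    moreover have "insert y Y \<inter> insert M A = {}" using Y y yA yY MA by auto
    moreover have "\<forall>z\<in>insert y Y. poly (pderiv f) z = 0 \<and> z < M" using Y y MA by auto
    ultimately show ?thesis using Y Mx by (intro exI[of _ "insert y Y"]) auto
  qed
qed

lemma rolle_Zinf:
  fixes f :: "real poly"
  assumes "f \<noteq> 0" "degree f \<le> n" "pderiv f \<noteq> 0"
  shows "Zinf n f \<le> Zinf (n - 1) (pderiv f) + 1"
proof -
  have dg: "degree f \<ge> 1" using assms(3) by (metis le_less_linear less_one pderiv_eq_0_iff)
  have dd: "degree (pderiv f) = degree f - 1" by (rule degree_pderiv)
  let ?R = "{x. poly f x = 0}"
  have finR: "finite ?R" using poly_roots_finite assms(1) by auto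
  have "Z f \<le> Z (pderiv f) + 1"
  proof (cases "?R = {}")
    case True then show ?thesis unfolding Z_def by simp
  next
    case False
    obtain Y where Y: "finite Y" "Y \<inter> ?R = {}" "card ?R \<le> card Y + 1" "\<forall>y\<in>Y. poly (pderiv f) y = 0"
      using rolle_set[OF finR False, of f] by auto
    have ord: "order x f = Suc (order x (pderiv f))" if "x \<in> ?R" for x
      using order_pderiv[of f x] assms that by auto
    have "Z f = (\<Sum>x\<in>?R. Suc (order x (pderiv f)))" unfolding Z_def using ord by simp
    also have "\<dots> = (\<Sum>x\<in>?R. order x (pderiv f)) + card ?R"
    proof -
      have "(\<Sum>x\<in>?R. Suc (order x (pderiv f))) = (\<Sum>x\<in>?R. order x (pderiv f)) + (\<Sum>x\<in>?R. 1)"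
        unfolding Suc_eq_plus1 by (rule sum.distrib)
      then show ?thesis by simp
    qed
    finally have Zf: "Z f = (\<Sum>x\<in>?R. order x (pderiv f)) + card ?R" .
    have "card Y \<le> (\<Sum>y\<in>Y. order y (pderiv f))"
    proof -
      have "(\<Sum>y\<in>Y. 1) \<le> (\<Sum>y\<in>Y. order y (pderiv f))"
        by (rule sum_mono) (use Y assms(3) order_root in \<open>auto simp: Suc_le_eq\<close>)
      then show ?thesis by simp
    qed
    moreover have "(\<Sum>x\<in>?R \<union> Y. order x (pderiv f)) = (\<Sum>x\<in>?R. order x (pderiv f)) + (\<Sum>y\<in>Y. order y (pderiv f))"
      by (rule sum.union_disjoint) (use finR Y in auto)
    moreover have "(\<Sum>x\<in>?R \<union> Y. order x (pderiv f)) \<le> Z (pderiv f)"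
    proof -
      let ?S = "{x. poly (pderiv f) x = 0}"
      have finS: "finite ?S" using poly_roots_finite assms(3) by auto
      have "Z (pderiv f) = (\<Sum>x\<in>?S \<union> (?R \<union> Y). order x (pderiv f))"
        by (rule Z_sum_superset) (use assms(3) finS finR Y in auto)
      also have "\<dots> \<ge> (\<Sum>x\<in>?R \<union> Y. order x (pderiv f))"
        by (rule sum_mono2) (use finS finR Y in auto)
      finally show ?thesis .
    qed
    ultimately show ?thesis using Zf Y(3) by linarith
  qed
  then show ?thesis unfolding Zinf_def using dd dg assms(2) by linarith
qed



definition Sub :: "real \<Rightarrow> real \<Rightarrow> real \<Rightarrow> real \<Rightarrow> nat \<Rightarrow> real poly \<Rightarrow> real poly" where
  "Sub \<alpha> \<beta> \<gamma> \<delta> m f = (\<Sum>i\<le>m. smult (coeff f i) ([:\<beta>, \<alpha>:] ^ i * [:\<delta>, \<gamma>:] ^ (m - i)))"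

lemma deg_pow_lin: "degree ([:b, a:] ^ n) \<le> n"
proof -
  have "degree ([:b, a:] ^ n) \<le> degree [:b, a:] * n" by (rule degree_power_le)
  also have "\<dots> \<le> 1 * n" by (intro mult_le_mono1) simp
  finally show ?thesis by simp
qed

lemma Sub_degree: "degree (Sub \<alpha> \<beta> \<gamma> \<delta> m f) \<le> m"
  unfolding Sub_def
proof (rule degree_sum_le)
  fix i assume "i \<in> {..m}"
  have "degree ([:\<beta>, \<alpha>:] ^ i * [:\<delta>, \<gamma>:] ^ (m - i)) \<le> degree ([:\<beta>, \<alpha>:] ^ i) + degree ([:\<delta>, \<gamma>:] ^ (m - i))"
    by (rule degree_mult_le)
  also have "\<dots> \<le> i + (m - i)"
    by (intro add_mono deg_pow_lin)
  finally show "degree (smult (coeff f i) ([:\<beta>, \<alpha>:] ^ i * [:\<delta>, \<gamma>:] ^ (m - i))) \<le> m"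
    using \<open>i \<in> {..m}\<close> by (simp add: order.trans[OF degree_smult_le])
qed simp

lemma poly_altdef_le:
  fixes f :: "real poly"
  assumes "degree f \<le> m"
  shows "poly f x = (\<Sum>i\<le>m. coeff f i * x ^ i)"
proof -
  have "poly f x = (\<Sum>i\<le>degree f. coeff f i * x ^ i)" by (rule poly_altdef)
  also have "\<dots> = (\<Sum>i\<le>m. coeff f i * x ^ i)"
    by (rule sum.mono_neutral_left) (use assms in \<open>auto simp: coeff_eq_0\<close>)
  finally show ?thesis .
qed

lemma Sub_eval:
  assumes "degree f \<le> m" "\<gamma> * t + \<delta> \<noteq> 0"
  shows "poly (Sub \<alpha> \<beta> \<gamma> \<delta> m f) t = (\<gamma> * t + \<delta>) ^ m * poly f ((\<alpha> * t + \<beta>) / (\<gamma> * t + \<delta>))"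
proof -
  let ?D = "\<gamma> * t + \<delta>" and ?N = "\<alpha> * t + \<beta>"
  have "poly (Sub \<alpha> \<beta> \<gamma> \<delta> m f) t = (\<Sum>i\<le>m. coeff f i * (?N ^ i * ?D ^ (m - i)))"
    unfolding Sub_def by (simp add: poly_sum algebra_simps)
  also have "\<dots> = (\<Sum>i\<le>m. ?D ^ m * (coeff f i * (?N / ?D) ^ i))"
  proof (rule sum.cong)
    fix i assume "i \<in> {..m}"
    then have "?D ^ m = ?D ^ i * ?D ^ (m - i)" by (simp flip: power_add)
    then show "coeff f i * (?N ^ i * ?D ^ (m - i)) = ?D ^ m * (coeff f i * (?N / ?D) ^ i)"
      using assms(2) by (simp add: power_divide field_simps)
  qed simp
  also have "\<dots> = ?D ^ m * poly f (?N / ?D)"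
    by (simp add: poly_altdef_le[OF assms(1)] sum_distrib_left)
  finally show ?thesis .
qed

lemma poly_eq_cofinite:
  fixes p q :: "real poly"
  assumes "finite S" "\<And>t. t \<notin> S \<Longrightarrow> poly p t = poly q t"
  shows "p = q"
proof (rule ccontr)
  assume "p \<noteq> q"
  then have "p - q \<noteq> 0" by simp
  then have "finite {t. poly (p - q) t = 0}" by (rule poly_roots_finite)
  then have "finite ({t. poly (p - q) t = 0} \<union> S)" using assms(1) by simp
  moreover have "{t. poly (p - q) t = 0} \<union> S = UNIV" using assms(2) by auto
  ultimately show False using infinite_UNIV_char_0 by (metis)
qed

lemma finite_Dzero:
  assumes "\<alpha> * \<delta> - \<beta> * \<gamma> \<noteq> 0"
  shows "finite {t::real. \<gamma> * t + \<delta> = 0}"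
proof -
  have "[:\<delta>, \<gamma>:] \<noteq> 0" using assms by auto
  from poly_roots_finite[OF this] show ?thesis by (simp add: algebra_simps)
qed

lemma Sub_lin: "Sub \<alpha> \<beta> \<gamma> \<delta> 1 [:b, a:] = [:a * \<beta> + b * \<delta>, a * \<alpha> + b * \<gamma>:]"
  unfolding Sub_def by (simp add: atMost_Suc)

lemma Sub_nonzero:
  assumes "\<alpha> * \<delta> - \<beta> * \<gamma> \<noteq> 0" "f \<noteq> 0" "degree f \<le> m"
  shows "Sub \<alpha> \<beta> \<gamma> \<delta> m f \<noteq> 0"
proof
  assume S0: "Sub \<alpha> \<beta> \<gamma> \<delta> m f = 0"
  let ?U = "{t::real. \<gamma> * t + \<delta> \<noteq> 0}"
  let ?h = "\<lambda>t. (\<alpha> * t + \<beta>) / (\<gamma> * t + \<delta>)"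
  have infU: "infinite ?U"
  proof
    assume "finite ?U"
    then have "finite (?U \<union> {t. \<gamma> * t + \<delta> = 0})" using finite_Dzero[OF assms(1)] by simp
    moreover have "?U \<union> {t. \<gamma> * t + \<delta> = 0} = UNIV" by auto
    ultimately show False using infinite_UNIV_char_0 by metis
  qed
  have inj: "inj_on ?h ?U"
  proof (rule inj_onI)
    fix x y assume xy: "x \<in> ?U" "y \<in> ?U" "?h x = ?h y"
    then have "(\<alpha> * x + \<beta>) * (\<gamma> * y + \<delta>) = (\<alpha> * y + \<beta>) * (\<gamma> * x + \<delta>)"
      by (simp add: field_simps)
    then have "(\<alpha> * \<delta> - \<beta> * \<gamma>) * (x - y) = 0" by (simp add: algebra_simps)
    then show "x = y" using assms(1) by simp
  qed
  have "?h ` ?U \<subseteq> {x. poly f x = 0}"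
  proof
    fix x assume "x \<in> ?h ` ?U"
    then obtain t where t: "t \<in> ?U" "x = ?h t" by auto
    have "(\<gamma> * t + \<delta>) ^ m * poly f x = 0"
      using Sub_eval[OF assms(3), of \<gamma> t \<delta> \<alpha> \<beta>] t S0 by simp
    then show "x \<in> {x. poly f x = 0}" using t(1) by simp
  qed
  moreover have "infinite (?h ` ?U)" using infU inj finite_imageD by blast
  ultimately show False using poly_roots_finite[OF assms(2)] finite_subset by blast
qed

lemma Sub_mult_prod:
  assumes det: "\<alpha> * \<delta> - \<beta> * \<gamma> \<noteq> 0"
    and L: "\<And>i. i < K \<Longrightarrow> degree (L i) \<le> 1" and g: "degree g \<le> n - K" and K: "K \<le> n"
  shows "Sub \<alpha> \<beta> \<gamma> \<delta> n ((\<Prod>i<K. L i) * g) = (\<Prod>i<K. Sub \<alpha> \<beta> \<gamma> \<delta> 1 (L i)) * Sub \<alpha> \<beta> \<gamma> \<delta> (n - K) g"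
proof (rule poly_eq_cofinite[OF finite_Dzero[OF det]])
  fix t assume t: "t \<notin> {t. \<gamma> * t + \<delta> = 0}"
  let ?D = "\<gamma> * t + \<delta>" and ?x = "(\<alpha> * t + \<beta>) / (\<gamma> * t + \<delta>)"
  have dP: "degree (\<Prod>i<K. L i) \<le> K"
  proof -
    have "degree (\<Prod>i<K. L i) \<le> (\<Sum>i<K. degree (L i))" by (rule degree_prod_sum_le[simplified]) simp
    also have "\<dots> \<le> (\<Sum>i<K. 1)" by (rule sum_mono) (use L in auto)
    finally show ?thesis by simp
  qed
  have deg: "degree ((\<Prod>i<K. L i) * g) \<le> n"
    using degree_mult_le[of "\<Prod>i<K. L i" g] dP g K by linarith
  have "poly (Sub \<alpha> \<beta> \<gamma> \<delta> n ((\<Prod>i<K. L i) * g)) t = ?D ^ n * ((\<Prod>i<K. poly (L i) ?x) * poly g ?x)"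
    using Sub_eval[OF deg, of \<gamma> t \<delta>] t by (simp add: poly_prod)
  also have "\<dots> = (\<Prod>i<K. ?D * poly (L i) ?x) * (?D ^ (n - K) * poly g ?x)"
  proof -
    have "?D ^ n = ?D ^ K * ?D ^ (n - K)" using K by (simp flip: power_add)
    moreover have "(\<Prod>i<K. ?D * poly (L i) ?x) = ?D ^ K * (\<Prod>i<K. poly (L i) ?x)"
      by (simp add: prod.distrib)
    ultimately show ?thesis by (simp add: algebra_simps)
  qed
  also have "\<dots> = poly ((\<Prod>i<K. Sub \<alpha> \<beta> \<gamma> \<delta> 1 (L i)) * Sub \<alpha> \<beta> \<gamma> \<delta> (n - K) g) t"
    using Sub_eval[OF L, of _ \<gamma> t \<delta>] Sub_eval[OF g, of \<gamma> t \<delta>] t by (simp add: poly_prod)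
  finally show "poly (Sub \<alpha> \<beta> \<gamma> \<delta> n ((\<Prod>i<K. L i) * g)) t =
       poly ((\<Prod>i<K. Sub \<alpha> \<beta> \<gamma> \<delta> 1 (L i)) * Sub \<alpha> \<beta> \<gamma> \<delta> (n - K) g) t" .
qed

lemma Zinf_Sub:
  assumes det: "\<alpha> * \<delta> - \<beta> * \<gamma> \<noteq> 0" and f: "f \<noteq> 0" "degree f \<le> n"
  shows "Zinf n f \<le> Zinf n (Sub \<alpha> \<beta> \<gamma> \<delta> n f)"
proof -
  define K where "K = Zinf n f"
  obtain L g where Lg: "\<forall>i<K. L i \<noteq> 0 \<and> degree (L i) \<le> 1" "degree g \<le> n - K" "f = (\<Prod>i<K. L i) * g"
    using FL_Zinf[OF f] unfolding K_def by blast
  have Kn: "K \<le> n" unfolding K_def using Zinf_le[OF f] .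
  have eq: "Sub \<alpha> \<beta> \<gamma> \<delta> n f = (\<Prod>i<K. Sub \<alpha> \<beta> \<gamma> \<delta> 1 (L i)) * Sub \<alpha> \<beta> \<gamma> \<delta> (n - K) g"
    using Sub_mult_prod[OF det _ Lg(2) Kn, of L] Lg by auto
  show ?thesis unfolding K_def[symmetric]
  proof (rule FL_le[OF _ eq])
    show "Sub \<alpha> \<beta> \<gamma> \<delta> n f \<noteq> 0" by (rule Sub_nonzero[OF det f])
    show "\<And>i. i < K \<Longrightarrow> Sub \<alpha> \<beta> \<gamma> \<delta> 1 (L i) \<noteq> 0 \<and> degree (Sub \<alpha> \<beta> \<gamma> \<delta> 1 (L i)) \<le> 1"
      using Sub_nonzero[OF det] Sub_degree Lg(1) by blast
    show "degree (Sub \<alpha> \<beta> \<gamma> \<delta> (n - K) g) \<le> n - K" by (rule Sub_degree)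
  qed (use Kn in auto)
qed

definition PS :: "nat \<Rightarrow> nat set \<Rightarrow> (nat \<Rightarrow> real) \<Rightarrow> (nat \<Rightarrow> real) \<Rightarrow> (nat \<Rightarrow> real) \<Rightarrow> real poly" where
  "PS n A \<mu> a b = (\<Sum>k\<in>A. smult (\<mu> k) ([:b k, a k:] ^ n))"

lemma PS_degree: "degree (PS n A \<mu> a b) \<le> n"
  unfolding PS_def
proof (induction A rule: infinite_finite_induct)
  case (insert x F)
  have "degree ([:b x, a x:] ^ n) \<le> n"
    by (rule deg_pow_lin)
  then show ?case using insert
    by (simp add: degree_add_le order.trans[OF degree_smult_le])
qed auto

lemma Sub_PS:
  assumes det: "\<alpha> * \<delta> - \<beta> * \<gamma> \<noteq> 0"
  shows "Sub \<alpha> \<beta> \<gamma> \<delta> n (PS n A \<mu> a b) =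
    PS n A \<mu> (\<lambda>k. a k * \<alpha> + b k * \<gamma>) (\<lambda>k. a k * \<beta> + b k * \<delta>)"
proof (rule poly_eq_cofinite[OF finite_Dzero[OF det]])
  fix t assume t: "t \<notin> {t. \<gamma> * t + \<delta> = 0}"
  let ?D = "\<gamma> * t + \<delta>" and ?x = "(\<alpha> * t + \<beta>) / (\<gamma> * t + \<delta>)"
  have "poly (Sub \<alpha> \<beta> \<gamma> \<delta> n (PS n A \<mu> a b)) t = ?D ^ n * (\<Sum>k\<in>A. \<mu> k * (b k + ?x * a k) ^ n)"
    using Sub_eval[OF PS_degree, of \<gamma> t \<delta>] t unfolding PS_def by (simp add: poly_sum)
  also have "\<dots> = (\<Sum>k\<in>A. \<mu> k * (b k * \<delta> + a k * \<beta> + t * (a k * \<alpha> + b k * \<gamma>)) ^ n)"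
    unfolding sum_distrib_left
  proof (rule sum.cong)
    fix k
    have eq: "?D * (b k + ?x * a k) = b k * \<delta> + a k * \<beta> + t * (a k * \<alpha> + b k * \<gamma>)"
      using t by (simp add: field_simps)
    have "?D ^ n * (\<mu> k * (b k + ?x * a k) ^ n) = \<mu> k * (?D * (b k + ?x * a k)) ^ n"
      by (simp add: power_mult_distrib)
    then show "?D ^ n * (\<mu> k * (b k + ?x * a k) ^ n) = \<mu> k * (b k * \<delta> + a k * \<beta> + t * (a k * \<alpha> + b k * \<gamma>)) ^ n"
      using eq by simp
  qed simp
  also have "\<dots> = poly (PS n A \<mu> (\<lambda>k. a k * \<alpha> + b k * \<gamma>) (\<lambda>k. a k * \<beta> + b k * \<delta>)) t"
    unfolding PS_def by (simp add: poly_sum algebra_simps)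
  finally show "poly (Sub \<alpha> \<beta> \<gamma> \<delta> n (PS n A \<mu> a b)) t =
    poly (PS n A \<mu> (\<lambda>k. a k * \<alpha> + b k * \<gamma>) (\<lambda>k. a k * \<beta> + b k * \<delta>)) t" .
qed



declare upt.simps(2)[simp del]

fun sc2 :: "real list \<Rightarrow> nat" where
  "sc2 (x # y # ys) = (if x * y < 0 then 1 else 0) + sc2 (y # ys)"
| "sc2 _ = 0"

definition cset :: "real list \<Rightarrow> nat set" where
  "cset xs = {i. Suc i < length xs \<and> xs ! i * xs ! Suc i < 0}"

lemma cset_card: "card (cset xs) = sc2 xs"
proof (induction xs rule: sc2.induct)
  case (1 x y ys)
  have fin: "finite (cset (y # ys))" unfolding cset_def by (rule finite_subset[of _ "{..<length (y#ys)}"]) auto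
  have eq: "cset (x # y # ys) = (if x * y < 0 then {0} else {}) \<union> Suc ` cset (y # ys)"
  proof (rule set_eqI)
    fix i show "i \<in> cset (x # y # ys) \<longleftrightarrow> i \<in> (if x * y < 0 then {0} else {}) \<union> Suc ` cset (y # ys)"
      by (cases i) (auto simp: cset_def)
  qed
  have "card (cset (x # y # ys)) = (if x * y < 0 then 1 else 0) + card (Suc ` cset (y # ys))"
    unfolding eq using fin by (auto simp: card_insert_if)
  also have "card (Suc ` cset (y # ys)) = card (cset (y # ys))" by (simp add: card_image)
  finally show ?case using 1 by simp
next
  case "2_1" then show ?case by (simp add: cset_def)
next
  case ("2_2" v) then show ?case by (simp add: cset_def)
qed

lemma sign_changes_sc2:
  assumes "\<forall>x\<in>set xs. x \<noteq> 0"
  shows "sign_changes xs = sc2 xs"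
proof -
  have "filter (\<lambda>x. x \<noteq> 0) xs = xs" using assms by (simp add: filter_id_conv)
  then show ?thesis unfolding sign_changes_def Let_def using cset_card[of xs] by (simp add: cset_def)
qed

lemma sc2_pos_ex: "sc2 xs \<ge> 1 \<Longrightarrow> \<exists>i. Suc i < length xs \<and> xs ! i * xs ! Suc i < 0"
  using cset_card[of xs] card.empty unfolding cset_def by (metis (mono_tags, lifting) empty_Collect_eq not_one_le_zero)

lemma sc2_append:
  "A \<noteq> [] \<Longrightarrow> B \<noteq> [] \<Longrightarrow> sc2 (A @ B) = sc2 A + (if last A * hd B < 0 then 1 else 0) + sc2 B"
proof (induction A rule: sc2.induct)
  case (1 x y ys) then show ?case by simp
next
  case "2_1" then show ?case by simp
next
  case ("2_2" v) then show ?case by (cases B) auto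
qed

lemma sc2_Cons: "B \<noteq> [] \<Longrightarrow> sc2 (x # B) = (if x * hd B < 0 then 1 else 0) + sc2 B"
  by (cases B) auto

lemma sign_rel_aux:
  fixes s x x' y y' :: real
  assumes "0 < s * (x * x')" "0 < s * (y * y')"
  shows "(x * y < 0) = (x' * y' < 0)"
proof -
  have "0 < (s * (x * x')) * (s * (y * y'))" using assms by (rule mult_pos_pos)
  then have "0 < (s * s) * ((x * y) * (x' * y'))" by (simp add: algebra_simps)
  then have "0 < (x * y) * (x' * y')" by (simp add: zero_less_mult_iff)
  then show ?thesis by (auto simp: zero_less_mult_iff mult_less_0_iff)
qed

lemma sc2_rel:
  "list_all2 (\<lambda>x y. 0 < s * (x * y)) xs ys \<Longrightarrow> sc2 xs = sc2 ys"
proof (induction xs arbitrary: ys rule: sc2.induct)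
  case (1 x y zs)
  then obtain x' y' ws where ys: "ys = x' # y' # ws" by (metis list_all2_Cons1)
  have r: "0 < s * (x * x')" "0 < s * (y * y')" using 1(2) ys by auto
  have "sc2 (y # zs) = sc2 (y' # ws)" using 1 ys by auto
  then show ?case using ys sign_rel_aux[OF r] by simp
next
  case "2_1" then show ?case by simp
next
  case ("2_2" v) then show ?case by (cases ys) auto
qed

lemma sc2_parity:
  "(\<forall>x\<in>set xs. x \<noteq> 0) \<Longrightarrow> xs \<noteq> [] \<Longrightarrow> even (sc2 xs) = (0 < hd xs * last xs)"
proof (induction xs rule: sc2.induct)
  case (1 x y ys)
  have ih: "even (sc2 (y # ys)) = (0 < y * last (y # ys))" using 1 by auto
  have nz: "x \<noteq> 0" "y \<noteq> 0" "last (y # ys) \<noteq> 0" using 1(2) by auto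
  show ?case using ih nz
    by (auto simp: zero_less_mult_iff mult_less_0_iff)
next
  case "2_1" then show ?case by simp
next
  case ("2_2" v) then show ?case by (auto simp: zero_less_mult_iff linorder_neq_iff)
qed

lemma pos_trans3:
  fixes x y z :: real
  assumes "0 < x * y" "0 < y * z"
  shows "0 < x * z"
proof -
  have "0 < (x * y) * (y * z)" using assms by (rule mult_pos_pos)
  then have "0 < (y * y) * (x * z)" by (simp add: algebra_simps)
  then show ?thesis by (simp add: zero_less_mult_iff)
qed

lemma sc2_zero:
  "(\<forall>x\<in>set xs. x \<noteq> 0) \<Longrightarrow> sc2 xs = 0 \<Longrightarrow> \<forall>z\<in>set xs. 0 < hd xs * z"
proof (induction xs rule: sc2.induct)
  case (1 x y ys)
  have s0: "sc2 (y # ys) = 0" "\<not> x * y < 0" using 1(3) by (auto split: if_splits)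
  have ih: "\<forall>z\<in>set (y # ys). 0 < y * z" using 1(1)[OF _ s0(1)] 1(2) by simp
  have "x * y \<noteq> 0" using 1(2) by simp
  then have xy: "0 < x * y" using s0(2) by linarith
  have "0 < x * z" if "z \<in> set (y # ys)" for z
    using ih that xy pos_trans3 by blast
  moreover have "0 < x * x" using 1(2) by (auto simp: zero_less_mult_iff linorder_neq_iff)
  ultimately show ?case by simp
next
  case "2_1" then show ?case by simp
next
  case ("2_2" v) then show ?case by (auto simp: zero_less_mult_iff linorder_neq_iff)
qed

lemma upt_split: "i \<le> j \<Longrightarrow> j \<le> k \<Longrightarrow> [i..<k] = [i..<j] @ [j..<k]"
  using upt_add_eq_append[of i j "k - j"] by simp

definition cycl :: "nat \<Rightarrow> nat \<Rightarrow> (nat \<Rightarrow> real) \<Rightarrow> real list" where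
  "cycl n r \<mu> = map \<mu> [1..<r+1] @ [(-1) ^ n * \<mu> 1]"

lemma cycl_nz: "(\<forall>k. 1 \<le> k \<and> k \<le> r \<longrightarrow> \<mu> k \<noteq> 0) \<Longrightarrow> 1 \<le> r \<Longrightarrow> \<forall>x\<in>set (cycl n r \<mu>). x \<noteq> 0"
  unfolding cycl_def by auto

lemma cycl_parity:
  assumes "\<forall>k. 1 \<le> k \<and> k \<le> r \<longrightarrow> \<mu> k \<noteq> 0" "1 \<le> r"
  shows "even (sc2 (cycl n r \<mu>)) = even n"
proof -
  have hd: "hd (cycl n r \<mu>) = \<mu> 1" using assms(2) unfolding cycl_def by (simp add: hd_append hd_map del: upt_Suc)
  have "even (sc2 (cycl n r \<mu>)) = (0 < \<mu> 1 * ((-1) ^ n * \<mu> 1))"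
    using sc2_parity[OF cycl_nz[OF assms]] hd unfolding cycl_def by simp
  also have "\<dots> = even n"
  proof -
    have "\<mu> 1 \<noteq> 0" using assms by auto
    then have "0 < \<mu> 1 * \<mu> 1" by (auto simp: zero_less_mult_iff linorder_neq_iff)
    then show ?thesis
      by (cases "even n") (auto simp: mult.left_commute zero_less_mult_iff)
  qed
  finally show ?thesis .
qed

lemma cycl_zero:
  assumes "\<forall>k. 1 \<le> k \<and> k \<le> r \<longrightarrow> \<mu> k \<noteq> 0" "1 \<le> r" "sc2 (cycl n r \<mu>) = 0"
  shows "even n \<and> (\<forall>k. 1 \<le> k \<and> k \<le> r \<longrightarrow> 0 < \<mu> 1 * \<mu> k)"
proof -
  have hd: "hd (cycl n r \<mu>) = \<mu> 1" using assms(2) unfolding cycl_def by (simp add: hd_append hd_map del: upt_Suc)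
  note Z = sc2_zero[OF cycl_nz[OF assms(1,2)] assms(3), unfolded hd]
  have "0 < \<mu> 1 * ((-1) ^ n * \<mu> 1)" using Z unfolding cycl_def by auto
  then have "even n" by (cases "even n") (auto simp: zero_less_mult_iff mult_less_0_iff)
  moreover have "0 < \<mu> 1 * \<mu> k" if "1 \<le> k" "k \<le> r" for k
    using Z that unfolding cycl_def by auto
  ultimately show ?thesis by auto
qed

lemma cycl_good_ex:
  assumes "2 \<le> r" "sc2 (cycl n r \<mu>) \<ge> 1"
  shows "\<exists>j. 2 \<le> j \<and> j \<le> r \<and> (\<mu> (j - 1) * \<mu> j < 0 \<or>
            \<mu> j * (if j < r then \<mu> (j + 1) else (-1) ^ n * \<mu> 1) < 0)"
proof -
  obtain i where i: "Suc i < length (cycl n r \<mu>)" "cycl n r \<mu> ! i * cycl n r \<mu> ! Suc i < 0"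
    using sc2_pos_ex[OF assms(2)] by auto
  have len: "length (cycl n r \<mu>) = r + 1" unfolding cycl_def by simp
  have nth: "cycl n r \<mu> ! k = (if k < r then \<mu> (k + 1) else (-1) ^ n * \<mu> 1)" if "k \<le> r" for k
    using that unfolding cycl_def by (auto simp: nth_append del: upt_Suc)
  show ?thesis
  proof (cases "Suc i < r")
    case True
    then show ?thesis using i nth[of i] nth[of "Suc i"]
      by (intro exI[of _ "i + 2"]) auto
  next
    case False
    then have "Suc i = r" using i len by simp
    then show ?thesis using i nth[of i] nth[of "Suc i"] assms(1)
      by (intro exI[of _ r]) auto
  qed
qed

lemma list_all2_map_upt:
  "(\<And>k. m \<le> k \<Longrightarrow> k < n \<Longrightarrow> P (f k) (g k)) \<Longrightarrow> list_all2 P (map f [m..<n]) (map g [m..<n])"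
  by (auto simp: list_all2_conv_all_nth)

lemma list_all2_last_hd:
  assumes "list_all2 P xs ys" "xs \<noteq> []"
  shows "P (last xs) (last ys)" "P (hd xs) (hd ys)"
proof -
  have l: "length xs = length ys" "\<forall>i<length xs. P (xs ! i) (ys ! i)"
    using assms(1) by (auto simp: list_all2_conv_all_nth)
  have ys: "ys \<noteq> []" using l assms(2) by auto
  show "P (last xs) (last ys)" using l assms(2) ys by (simp add: last_conv_nth)
  show "P (hd xs) (hd ys)" using l assms(2) ys by (simp add: hd_conv_nth)
qed

lemma negpow: "1 \<le> n \<Longrightarrow> (-1::real) ^ (n - 1) * (-1) ^ n = -1"
proof -
  assume "1 \<le> n"
  then obtain m where "n = Suc m" by (cases n) auto
  then show ?thesis by (simp add: power_mult_distrib[symmetric])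
qed
lemma lastrel_aux:
  fixes v u :: real
  assumes "v * u < 0" "1 \<le> n"
  shows "0 < 1 * ((-1) ^ (n - 1) * v * ((-1) ^ n * u))"
proof -
  have "1 * ((-1) ^ (n - 1) * v * ((-1) ^ n * u)) = ((-1::real) ^ (n - 1) * (-1) ^ n) * (v * u)"
    by (simp add: algebra_simps)
  also have "\<dots> = - (v * u)" using negpow[OF assms(2)] by simp
  finally show ?thesis using assms(1) by linarith
qed

lemma cycl_elim:
  assumes r: "2 \<le> j" "j \<le> r" and n: "1 \<le> n"
    and nz: "\<forall>k. 1 \<le> k \<and> k \<le> r \<longrightarrow> \<mu> k \<noteq> 0"
    and lo: "\<forall>k. 1 \<le> k \<and> k < j \<longrightarrow> \<nu> k * \<mu> k < 0"
    and hi: "\<forall>k. j \<le> k \<and> k < r \<longrightarrow> 0 < \<nu> k * \<mu> (k + 1)"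
    and good: "\<mu> (j - 1) * \<mu> j < 0 \<or> \<mu> j * (if j < r then \<mu> (j + 1) else (-1) ^ n * \<mu> 1) < 0"
  shows "sc2 (cycl (n - 1) (r - 1) \<nu>) \<le> sc2 (cycl n r \<mu>)"
proof -
  define e where "e = (-1) ^ n * \<mu> 1"
  define nv where "nv = (if j < r then \<mu> (j + 1) else e)"
  define A where "A = map \<mu> [1..<j]"
  define B where "B = map \<mu> [Suc j..<r+1] @ [e]"
  define A' where "A' = map \<nu> [1..<j]"
  define B' where "B' = map \<nu> [j..<r] @ [(-1) ^ (n - 1) * \<nu> 1]"
  have up1: "[1..<r+1] = [1..<j] @ j # [Suc j..<r+1]"
    using r upt_split[of 1 j "r+1"] upt_conv_Cons[of j "r+1"] by simp
  have S: "cycl n r \<mu> = A @ (\<mu> j # B)" unfolding cycl_def A_def B_def e_def up1 by simp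
  have up2: "[1..<r - 1 + 1] = [1..<j] @ [j..<r]"
    using r upt_split[of 1 j r] by simp
  have S': "cycl (n - 1) (r - 1) \<nu> = A' @ B'" unfolding cycl_def A'_def B'_def up2 by simp
  have Ane: "A \<noteq> []" "A' \<noteq> []" using r by (auto simp: A_def A'_def)
  have Bne: "B \<noteq> []" "B' \<noteq> []" by (auto simp: B_def B'_def)
  have relA: "list_all2 (\<lambda>x y. 0 < (-1) * (x * y)) A' A"
    unfolding A'_def A_def by (rule list_all2_map_upt) (use lo in \<open>auto simp: mult.commute\<close>)
  have "map \<mu> [Suc j..<r+1] = map (\<lambda>k. \<mu> (k + 1)) [j..<r]"
    by (simp add: map_Suc_upt[symmetric] comp_def)
  then have B2: "B = map (\<lambda>k. \<mu> (k + 1)) [j..<r] @ [e]" unfolding B_def by simp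
  have lastrel: "0 < 1 * ((-1) ^ (n - 1) * \<nu> 1 * e)"
    unfolding e_def by (rule lastrel_aux) (use lo r n in auto)
  have relB: "list_all2 (\<lambda>x y. 0 < 1 * (x * y)) B' B"
    unfolding B'_def B2
    by (rule list_all2_appendI, rule list_all2_map_upt) (use hi lastrel in auto)
  have lA: "last A = \<mu> (j - 1)" unfolding A_def using r by (simp add: last_map)
  have hB: "hd B = nv" unfolding B_def nv_def by (cases "j < r") (auto simp: upt_conv_Cons)
  have la: "0 < (-1) * (last A' * last A)" using list_all2_last_hd(1)[OF relA Ane(2)] .
  have hb: "0 < 1 * (hd B' * hd B)" using list_all2_last_hd(2)[OF relB Bne(2)] .
  have "sc2 (cycl (n - 1) (r - 1) \<nu>) = sc2 A' + (if last A' * hd B' < 0 then 1 else 0) + sc2 B'"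
    unfolding S' using Ane Bne by (simp add: sc2_append)
  also have "sc2 A' = sc2 A" using sc2_rel[OF relA] .
  also have "sc2 B' = sc2 B" using sc2_rel[OF relB] .
  finally have E1: "sc2 (cycl (n - 1) (r - 1) \<nu>) = sc2 A + (if last A' * hd B' < 0 then 1 else 0) + sc2 B" .
  have E2: "sc2 (cycl n r \<mu>) = sc2 A + (if last A * \<mu> j < 0 then 1 else 0) + ((if \<mu> j * hd B < 0 then 1 else 0) + sc2 B)"
    unfolding S using Ane Bne by (simp add: sc2_append sc2_Cons)
  have "(if last A' * hd B' < 0 then 1 else 0) \<le> (if last A * \<mu> j < 0 then 1 else 0) + (if \<mu> j * hd B < 0 then 1 else (0::nat))"
    using good unfolding lA[symmetric] hB[symmetric] nv_def[symmetric] e_def[symmetric] by auto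
  then show ?thesis using E1 E2 by linarith
qed



definition cr :: "(nat \<Rightarrow> real) \<Rightarrow> (nat \<Rightarrow> real) \<Rightarrow> nat \<Rightarrow> nat \<Rightarrow> real" where
  "cr a b i k = a i * b k - a k * b i"

definition Cond :: "nat \<Rightarrow> (nat \<Rightarrow> real) \<Rightarrow> (nat \<Rightarrow> real) \<Rightarrow> (nat \<Rightarrow> real) \<Rightarrow> bool" where
  "Cond r a b \<mu> \<longleftrightarrow> (\<forall>k. 1 \<le> k \<and> k \<le> r \<longrightarrow> \<mu> k \<noteq> 0 \<and> (a k \<noteq> 0 \<or> b k \<noteq> 0)) \<and>
     (\<forall>i k. 1 \<le> i \<and> i < k \<and> k \<le> r \<longrightarrow> cr a b i k < 0)"

lemma coeff_lin_pow: "coeff ([:b, a:] ^ n) n = a ^ n"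
proof (induction n)
  case 0 show ?case by simp
next
  case (Suc n)
  have d: "coeff ([:b,a:]^n) (Suc n) = 0" using deg_pow_lin[of b a n] by (simp add: coeff_eq_0)
  have "[:b,a:] ^ Suc n = [:b,a:] ^ n * [:b,a:]" by (simp add: power_Suc2 del: power_Suc)
  also have "\<dots> = smult b ([:b,a:] ^ n) + pCons 0 (smult a ([:b,a:] ^ n))"
    by (simp add: mult_pCons_right)
  finally show ?case using Suc d by simp
qed

lemma coeff_PS: "coeff (PS n A \<mu> a b) n = (\<Sum>k\<in>A. \<mu> k * a k ^ n)"
  unfolding PS_def by (simp add: coeff_sum coeff_lin_pow)

lemma poly_PS: "poly (PS n A \<mu> a b) t = (\<Sum>k\<in>A. \<mu> k * (a k * t + b k) ^ n)"
  unfolding PS_def by (simp add: poly_sum algebra_simps)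

lemma pderiv_sum': "pderiv (sum f A) = (\<Sum>x\<in>A. pderiv (f x))"
  by (induction A rule: infinite_finite_induct) (simp_all add: pderiv_add)

lemma pderiv_PS:
  assumes "1 \<le> n"
  shows "pderiv (PS n A \<mu> a b) = PS (n - 1) A (\<lambda>k. \<mu> k * of_nat n * a k) a b"
  unfolding PS_def pderiv_sum'
proof (rule sum.cong)
  fix k
  have "pderiv [:b k, a k:] = [:a k:]" by (simp add: pderiv_pCons)
  then show "pderiv (smult (\<mu> k) ([:b k, a k:] ^ n)) = smult (\<mu> k * of_nat n * a k) ([:b k, a k:] ^ (n - 1))"
    by (simp add: pderiv_smult pderiv_power mult_ac)
qed simp

lemma PS_zero_coeff:
  assumes "finite A" "c j = 0"
  shows "PS m A c a b = PS m (A - {j}) c a b"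
  unfolding PS_def by (rule sum.mono_neutral_right) (use assms in auto)

lemma PS_cong:
  assumes "\<And>k. k \<in> A \<Longrightarrow> c k = c' k \<and> a k = a' k \<and> b k = b' k"
  shows "PS m A c a b = PS m A c' a' b'"
  unfolding PS_def by (rule sum.cong) (use assms in auto)

lemma sum_pos_witness:
  fixes f :: "nat \<Rightarrow> real"
  assumes "finite A" "k \<in> A" "0 < f k" "\<And>i. i \<in> A \<Longrightarrow> 0 \<le> f i"
  shows "0 < sum f A"
proof -
  have "f k \<le> sum f A" by (rule member_le_sum) (use assms in auto)
  then show ?thesis using assms(3) by linarith
qed

lemma POS:
  assumes C: "Cond r a b \<mu>" and r: "2 \<le> r" and n: "even n"
    and sg: "\<forall>k. 1 \<le> k \<and> k \<le> r \<longrightarrow> 0 < \<mu> 1 * \<mu> k"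
  shows "PS n {1..r} \<mu> a b \<noteq> 0 \<and> Zinf n (PS n {1..r} \<mu> a b) = 0"
proof -
  let ?F = "PS n {1..r} \<mu> a b"
  have cr12: "a 1 * b 2 - a 2 * b 1 < 0" using C r unfolding Cond_def cr_def by auto
  have ev: "0 \<le> x ^ n" for x :: real using n by (simp add: zero_le_even_power)
  have evp: "0 < x ^ n" if "x \<noteq> 0" for x :: real
  proof -
    have "x ^ n \<noteq> 0" using that by simp
    then show ?thesis using ev[of x] by linarith
  qed
  have sgk: "0 < \<mu> 1 * \<mu> k" if "k \<in> {1..r}" for k using sg that by auto
  have pos: "0 < \<mu> 1 * poly ?F t" for t
  proof -
    have eq: "\<mu> 1 * poly ?F t = (\<Sum>k\<in>{1..r}. (\<mu> 1 * \<mu> k) * (a k * t + b k) ^ n)"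
      by (simp add: poly_PS sum_distrib_left mult.assoc)
    obtain k where k: "k \<in> {1..r}" "a k * t + b k \<noteq> 0"
    proof (cases "a 1 * t + b 1 = 0")
      case True
      have "a 2 * t + b 2 \<noteq> 0"
      proof
        assume "a 2 * t + b 2 = 0"
        then have "b 2 = - (a 2 * t)" "b 1 = - (a 1 * t)" using True by linarith+
        then have "a 1 * b 2 - a 2 * b 1 = 0" by (simp add: algebra_simps)
        then show False using cr12 by simp
      qed
      then show ?thesis using that[of 2] r by auto
    next
      case False then show ?thesis using that[of 1] r by auto
    qed
    have "0 < (\<Sum>k\<in>{1..r}. (\<mu> 1 * \<mu> k) * (a k * t + b k) ^ n)"
    proof (rule sum_pos_witness[OF _ k(1)])
      show "0 < (\<mu> 1 * \<mu> k) * (a k * t + b k) ^ n" using sgk[OF k(1)] evp[OF k(2)] by (rule mult_pos_pos)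
      show "0 \<le> (\<mu> 1 * \<mu> i) * (a i * t + b i) ^ n" if "i \<in> {1..r}" for i
        using sgk[OF that] ev[of "a i * t + b i"] by simp
    qed simp
    then show ?thesis using eq by simp
  qed
  have F0: "?F \<noteq> 0" using pos[of 0] by auto
  have "poly ?F x \<noteq> 0" for x using pos[of x] by auto
  then have "{x. poly ?F x = 0} = {}" by auto
  then have Z0: "Z ?F = 0" unfolding Z_def by simp
  have "0 < \<mu> 1 * coeff ?F n"
  proof -
    have eq: "\<mu> 1 * coeff ?F n = (\<Sum>k\<in>{1..r}. (\<mu> 1 * \<mu> k) * a k ^ n)"
      by (simp add: coeff_PS sum_distrib_left mult.assoc)
    obtain k where k: "k \<in> {1..r}" "a k \<noteq> 0"
    proof (cases "a 1 = 0")
      case True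
      then have "a 2 \<noteq> 0" using cr12 by auto
      then show ?thesis using that[of 2] r by auto
    next
      case False then show ?thesis using that[of 1] r by auto
    qed
    have "0 < (\<Sum>k\<in>{1..r}. (\<mu> 1 * \<mu> k) * a k ^ n)"
    proof (rule sum_pos_witness[OF _ k(1)])
      show "0 < (\<mu> 1 * \<mu> k) * a k ^ n" using sgk[OF k(1)] evp[OF k(2)] by (rule mult_pos_pos)
      show "0 \<le> (\<mu> 1 * \<mu> i) * a i ^ n" if "i \<in> {1..r}" for i
        using sgk[OF that] ev[of "a i"] by simp
    qed simp
    then show ?thesis using eq by simp
  qed
  then have "coeff ?F n \<noteq> 0" by auto
  then have "degree ?F = n" using PS_degree[of n "{1..r}" \<mu> a b] le_degree by (metis le_antisym)
  then show ?thesis using F0 Z0 unfolding Zinf_def by simp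
qed

lemma elim:
  assumes C: "Cond r a b \<mu>" and r: "2 \<le> r" and j: "1 \<le> j" "j \<le> r" and n: "1 \<le> n"
  shows "\<exists>\<alpha> \<beta> \<gamma> \<delta> \<nu> a'' b''. \<alpha> * \<delta> - \<beta> * \<gamma> \<noteq> 0 \<and> Cond (r - 1) a'' b'' \<nu> \<and>
     pderiv (Sub \<alpha> \<beta> \<gamma> \<delta> n (PS n {1..r} \<mu> a b)) = PS (n - 1) {1..r-1} \<nu> a'' b'' \<and>
     (\<forall>k. 1 \<le> k \<and> k < j \<longrightarrow> \<nu> k * \<mu> k < 0) \<and> (\<forall>k. j \<le> k \<and> k < r \<longrightarrow> 0 < \<nu> k * \<mu> (k + 1))"
proof -
  define a' where "a' = (\<lambda>k. a k * b j + b k * (- a j))"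
  define b' where "b' = (\<lambda>k. a k * a j + b k * b j)"
  define c where "c = (\<lambda>k. \<mu> k * of_nat n * a' k)"
  define idx where "idx = (\<lambda>k::nat. if k < j then k else Suc k)"
  have crC: "\<And>i k. 1 \<le> i \<Longrightarrow> i < k \<Longrightarrow> k \<le> r \<Longrightarrow> cr a b i k < 0"
    and nzC: "\<And>k. 1 \<le> k \<Longrightarrow> k \<le> r \<Longrightarrow> \<mu> k \<noteq> 0 \<and> (a k \<noteq> 0 \<or> b k \<noteq> 0)"
    using C unfolding Cond_def by auto
  have a'cr: "a' k = cr a b k j" for k unfolding a'_def cr_def by (simp add: algebra_simps)
  have a'lo: "a' k < 0" if "1 \<le> k" "k < j" for k using crC[of k j] that j a'cr by simp
  have a'hi: "0 < a' k" if "j < k" "k \<le> r" for k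
    using crC[of j k] that j a'cr unfolding cr_def by simp
  have detp: "0 < a j * a j + b j * b j"
  proof -
    have "a j \<noteq> 0 \<or> b j \<noteq> 0" using nzC j by auto
    then show ?thesis by (metis power2_eq_square sum_power2_gt_zero_iff)
  qed
  have det: "b j * b j - a j * (- a j) \<noteq> 0" using detp by linarith
  have S: "Sub (b j) (a j) (- a j) (b j) n (PS n {1..r} \<mu> a b) = PS n {1..r} \<mu> a' b'"
    unfolding a'_def b'_def by (rule Sub_PS[OF det])
  have D1: "pderiv (PS n {1..r} \<mu> a' b') = PS (n - 1) {1..r} c a' b'"
    unfolding c_def by (rule pderiv_PS[OF n])
  have cj: "c j = 0" unfolding c_def a'_def by simp
  have D2: "PS (n - 1) {1..r} c a' b' = PS (n - 1) ({1..r} - {j}) c a' b'"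
    using PS_zero_coeff[of "{1..r}" c j] cj by simp
  have bij: "bij_betw idx {1..r-1} ({1..r} - {j})"
  proof (rule bij_betw_byWitness[where f' = "\<lambda>k. if k < j then k else k - 1"])
    show "\<forall>x\<in>{1..r - 1}. (if idx x < j then idx x else idx x - 1) = x" unfolding idx_def by auto
    show "\<forall>y\<in>{1..r} - {j}. idx (if y < j then y else y - 1) = y" unfolding idx_def using j by auto
    show "idx ` {1..r - 1} \<subseteq> {1..r} - {j}" unfolding idx_def using j r by auto
    show "(\<lambda>k. if k < j then k else k - 1) ` ({1..r} - {j}) \<subseteq> {1..r - 1}" using j by auto
  qed
  have D3: "PS (n - 1) ({1..r} - {j}) c a' b' = PS (n - 1) {1..r-1} (c \<circ> idx) (a' \<circ> idx) (b' \<circ> idx)"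
    unfolding PS_def using sum.reindex_bij_betw[OF bij, of "\<lambda>k. smult (c k) ([:b' k, a' k:] ^ (n - 1))"]
    by simp
  have idxr: "1 \<le> idx k \<and> idx k \<le> r \<and> idx k \<noteq> j" if "1 \<le> k" "k \<le> r - 1" for k
    using that j r unfolding idx_def by auto
  have a'nz: "a' (idx k) \<noteq> 0" if "1 \<le> k" "k \<le> r - 1" for k
    using idxr[OF that] a'lo a'hi by (metis linorder_neq_iff less_irrefl)
  have cond1: "(c \<circ> idx) k \<noteq> 0 \<and> ((a' \<circ> idx) k \<noteq> 0 \<or> (b' \<circ> idx) k \<noteq> 0)"
    if "1 \<le> k" "k \<le> r - 1" for k
    using a'nz[OF that] nzC[of "idx k"] idxr[OF that] n unfolding c_def by auto
  have cond2: "cr (a' \<circ> idx) (b' \<circ> idx) p q < 0" if pq: "1 \<le> p" "p < q" "q \<le> r - 1" for p q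
  proof -
    have mono: "idx p < idx q" using pq unfolding idx_def by auto
    have "cr a b (idx p) (idx q) < 0" using crC[OF _ mono] idxr pq by auto
    moreover have "cr (a' \<circ> idx) (b' \<circ> idx) p q = (a j * a j + b j * b j) * cr a b (idx p) (idx q)"
      unfolding cr_def a'_def b'_def by (simp add: algebra_simps)
    ultimately show ?thesis using detp by (simp add: mult_pos_neg)
  qed
  have cond: "Cond (r - 1) (a' \<circ> idx) (b' \<circ> idx) (c \<circ> idx)"
    unfolding Cond_def using cond1 cond2 by blast
  have lo: "(c \<circ> idx) k * \<mu> k < 0" if "1 \<le> k" "k < j" for k
  proof -
    have "(c \<circ> idx) k = \<mu> k * of_nat n * a' k" using that unfolding c_def idx_def by simp
    then have e: "(c \<circ> idx) k * \<mu> k = (\<mu> k * \<mu> k) * (of_nat n * a' k)" by (simp add: algebra_simps)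
    have "0 < \<mu> k * \<mu> k" using nzC[of k] that j by (auto simp: zero_less_mult_iff linorder_neq_iff)
    moreover have "of_nat n * a' k < 0" using a'lo[OF that] n by (simp add: mult_pos_neg)
    ultimately show ?thesis unfolding e by (simp add: mult_pos_neg)
  qed
  have hi: "0 < (c \<circ> idx) k * \<mu> (k + 1)" if "j \<le> k" "k < r" for k
  proof -
    have "(c \<circ> idx) k = \<mu> (k+1) * of_nat n * a' (k+1)" using that unfolding c_def idx_def by simp
    then have e: "(c \<circ> idx) k * \<mu> (k+1) = (\<mu> (k+1) * \<mu> (k+1)) * (of_nat n * a' (k+1))"
      by (simp add: algebra_simps)
    have "0 < \<mu> (k+1) * \<mu> (k+1)" using nzC[of "k+1"] that j by (auto simp: zero_less_mult_iff linorder_neq_iff)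
    moreover have "0 < of_nat n * a' (k+1)" using a'hi[of "k+1"] that n by simp
    ultimately show ?thesis unfolding e by (simp add: mult_pos_pos)
  qed
  show ?thesis
    apply (rule exI[of _ "b j"], rule exI[of _ "a j"], rule exI[of _ "- a j"], rule exI[of _ "b j"])
    apply (rule exI[of _ "c \<circ> idx"], rule exI[of _ "a' \<circ> idx"], rule exI[of _ "b' \<circ> idx"])
    using det cond S D1 D2 D3 lo hi by simp
qed

lemma sum_12: "(\<Sum>k\<in>{1..2::nat}. f k) = f 1 + f 2"
  by (simp add: numeral_2_eq_2)

lemma Sub_zero: "Sub \<alpha> \<beta> \<gamma> \<delta> m 0 = 0"
  by (simp add: Sub_def)

lemma base2:
  assumes C: "Cond 2 a b \<mu>" and n: "1 \<le> n" and F0: "PS n {1..2} \<mu> a b \<noteq> 0"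
  shows "Zinf n (PS n {1..2} \<mu> a b) \<le> 2"
proof -
  define a' where "a' = (\<lambda>k. a k * b 2 + b k * (- a 2))"
  define b' where "b' = (\<lambda>k. a k * a 2 + b k * b 2)"
  have crC: "cr a b 1 2 < 0" and nzC: "\<And>k. 1 \<le> k \<Longrightarrow> k \<le> 2 \<Longrightarrow> \<mu> k \<noteq> 0 \<and> (a k \<noteq> 0 \<or> b k \<noteq> 0)"
    using C unfolding Cond_def by auto
  have detp: "0 < a 2 * a 2 + b 2 * b 2"
  proof -
    have "a 2 \<noteq> 0 \<or> b 2 \<noteq> 0" using nzC[of 2] by auto
    then show ?thesis by (metis power2_eq_square sum_power2_gt_zero_iff)
  qed
  have det: "b 2 * b 2 - a 2 * (- a 2) \<noteq> 0" using detp by linarith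
  define G where "G = PS n {1..2} \<mu> a' b'"
  have S: "Sub (b 2) (a 2) (- a 2) (b 2) n (PS n {1..2} \<mu> a b) = G"
    unfolding G_def a'_def b'_def by (rule Sub_PS[OF det])
  have le1: "Zinf n (PS n {1..2} \<mu> a b) \<le> Zinf n G"
    using Zinf_Sub[OF det F0 PS_degree] S by simp
  have G0: "G \<noteq> 0" using Sub_nonzero[OF det F0 PS_degree] S by simp
  define A where "A = a' 1"
  define B where "B = b' 1"
  define c where "c = b' 2"
  have A0: "A \<noteq> 0" using crC unfolding A_def a'_def cr_def by (simp add: algebra_simps)
  have c0: "c \<noteq> 0" using detp unfolding c_def b'_def by linarith
  have a'2: "a' 2 = 0" unfolding a'_def by simp
  have mu: "\<mu> 1 \<noteq> 0" "\<mu> 2 \<noteq> 0" using nzC[of 1] nzC[of 2] by auto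
  have pG: "poly G x = \<mu> 1 * (A * x + B) ^ n + \<mu> 2 * c ^ n" for x
    unfolding G_def poly_PS sum_12 A_def B_def c_def using a'2 by simp
  have dG: "pderiv G = PS (n - 1) {1..2} (\<lambda>k. \<mu> k * of_nat n * a' k) a' b'"
    unfolding G_def by (rule pderiv_PS[OF n])
  have pdG: "poly (pderiv G) x = \<mu> 1 * of_nat n * A * (A * x + B) ^ (n - 1)" for x
    unfolding dG poly_PS sum_12 A_def B_def using a'2 by simp
  have cG: "coeff G n = \<mu> 1 * A ^ n"
    unfolding G_def coeff_PS sum_12 A_def using a'2 n by simp
  have degG: "degree G = n"
  proof -
    have "coeff G n \<noteq> 0" using cG mu A0 by simp
    then show ?thesis using PS_degree[of n "{1..2}" \<mu> a' b'] le_degree unfolding G_def by (metis le_antisym)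
  qed
  let ?R = "{x. poly G x = 0}"
  have finR: "finite ?R" using poly_roots_finite[OF G0] .
  have lin: "A * x + B \<noteq> 0" if "x \<in> ?R" for x
  proof
    assume "A * x + B = 0"
    then have "poly G x = \<mu> 2 * c ^ n" using pG n by simp
    then show False using that mu c0 by simp
  qed
  have ord1: "order x G = 1" if "x \<in> ?R" for x
  proof -
    have "poly (pderiv G) x \<noteq> 0" using pdG[of x] lin[OF that] mu A0 n by simp
    then have "order x (pderiv G) = 0" by (rule order_0I)
    then show ?thesis using order_pderiv[OF G0, of x] that by simp
  qed
  have ZG: "Z G = card ?R" unfolding Z_def using ord1 by simp
  have "card ?R \<le> 2"
  proof (cases "?R = {}")
    case True then show ?thesis by simp
  next
    case False
    obtain Y where Y: "finite Y" "card ?R \<le> card Y + 1" "\<forall>y\<in>Y. poly (pderiv G) y = 0"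
      using rolle_set[OF finR False, of G] by auto
    have "Y \<subseteq> {- B / A}"
    proof
      fix y assume "y \<in> Y"
      then have "\<mu> 1 * of_nat n * A * (A * y + B) ^ (n - 1) = 0" using Y(3) pdG by metis
      then have "(A * y + B) ^ (n - 1) = 0" using mu A0 n by simp
      then have "A * y + B = 0" by simp
      then show "y \<in> {- B / A}" using A0 by (simp add: field_simps)
    qed
    then have "card Y \<le> 1" using card_mono[of "{- B / A}" Y] by simp
    then show ?thesis using Y(2) by simp
  qed
  then have "Zinf n G \<le> 2" unfolding Zinf_def using ZG degG by simp
  then show ?thesis using le1 by simp
qed

lemma par_a: "even s \<Longrightarrow> 1 \<le> s \<Longrightarrow> 2 \<le> (s::nat)" by presburger
lemma par_b: "even s = even n \<Longrightarrow> n + 1 \<le> s \<Longrightarrow> n + 2 \<le> (s::nat)" by presburger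
lemma par_c: "even (z + n) \<Longrightarrow> even s = even n \<Longrightarrow> z \<le> s + 1 \<Longrightarrow> z \<le> (s::nat)" by presburger
lemma par_d: "even (z + n) \<Longrightarrow> even s = even n \<Longrightarrow> s \<noteq> 0 \<Longrightarrow> z \<le> 2 \<Longrightarrow> z \<le> (s::nat)" by presburger

lemma ZL:
  "1 \<le> r \<Longrightarrow> Cond r a b \<mu> \<Longrightarrow> PS n {1..r} \<mu> a b = 0 \<Longrightarrow> n + 2 \<le> sc2 (cycl n r \<mu>)"
proof (induction r arbitrary: n a b \<mu>)
  case 0 then show ?case by simp
next
  case (Suc r)
  have nzC: "\<And>k. 1 \<le> k \<Longrightarrow> k \<le> Suc r \<Longrightarrow> \<mu> k \<noteq> 0 \<and> (a k \<noteq> 0 \<or> b k \<noteq> 0)"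
    using Suc.prems(2) unfolding Cond_def by auto
  have nz: "\<forall>k. 1 \<le> k \<and> k \<le> Suc r \<longrightarrow> \<mu> k \<noteq> 0" using nzC by auto
  show ?case
  proof (cases "r = 0")
    case True
    have "PS n {1..Suc r} \<mu> a b = smult (\<mu> 1) ([:b 1, a 1:] ^ n)"
      unfolding PS_def True by simp
    moreover have "[:b 1, a 1:] \<noteq> 0" using nzC[of 1] by auto
    ultimately have "PS n {1..Suc r} \<mu> a b \<noteq> 0" using nzC[of 1] by simp
    then show ?thesis using Suc.prems by simp
  next
    case False
    have par: "even (sc2 (cycl n (Suc r) \<mu>)) = even n" by (rule cycl_parity[OF nz]) simp
    have s1: "sc2 (cycl n (Suc r) \<mu>) \<ge> 1"
    proof (rule ccontr)
      assume "\<not> ?thesis"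
      then have "sc2 (cycl n (Suc r) \<mu>) = 0" by simp
      from cycl_zero[OF nz _ this] have "even n \<and> (\<forall>k. 1 \<le> k \<and> k \<le> Suc r \<longrightarrow> 0 < \<mu> 1 * \<mu> k)" by simp
      then have "PS n {1..Suc r} \<mu> a b \<noteq> 0" using POS[OF Suc.prems(2)] False by simp
      then show False using Suc.prems by simp
    qed
    show ?thesis
    proof (cases "n = 0")
      case True then show ?thesis using par_a[of "sc2 (cycl n (Suc r) \<mu>)"] par s1 by simp
    next
      case n0: False
      obtain j where j: "2 \<le> j" "j \<le> Suc r" "\<mu> (j - 1) * \<mu> j < 0 \<or>
            \<mu> j * (if j < Suc r then \<mu> (j + 1) else (-1) ^ n * \<mu> 1) < 0"
        using cycl_good_ex[OF _ s1] False by auto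
      obtain \<alpha> \<beta> \<gamma> \<delta> \<nu> a'' b'' where E: "\<alpha> * \<delta> - \<beta> * \<gamma> \<noteq> 0" "Cond (Suc r - 1) a'' b'' \<nu>"
        "pderiv (Sub \<alpha> \<beta> \<gamma> \<delta> n (PS n {1..Suc r} \<mu> a b)) = PS (n - 1) {1..Suc r - 1} \<nu> a'' b''"
        "\<forall>k. 1 \<le> k \<and> k < j \<longrightarrow> \<nu> k * \<mu> k < 0" "\<forall>k. j \<le> k \<and> k < Suc r \<longrightarrow> 0 < \<nu> k * \<mu> (k + 1)"
        using elim[OF Suc.prems(2) _ _ j(2), of n] j False n0 by auto
      have "PS (n - 1) {1..r} \<nu> a'' b'' = 0" using E(3) Suc.prems(3) by (simp add: Sub_zero)
      then have "n - 1 + 2 \<le> sc2 (cycl (n - 1) r \<nu>)" using Suc.IH[of a'' b'' \<nu> "n - 1"] E(2) False by simp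
      moreover have "sc2 (cycl (n - 1) (Suc r - 1) \<nu>) \<le> sc2 (cycl n (Suc r) \<mu>)"
        by (rule cycl_elim[OF j(1,2) _ nz]) (use n0 E(4,5) j(3) in auto)
      ultimately have "n + 1 \<le> sc2 (cycl n (Suc r) \<mu>)" using n0 by simp
      then show ?thesis using par_b[OF par] by simp
    qed
  qed
qed

lemma MAIN:
  "2 \<le> r \<Longrightarrow> Cond r a b \<mu> \<Longrightarrow> PS n {1..r} \<mu> a b \<noteq> 0 \<Longrightarrow>
    Zinf n (PS n {1..r} \<mu> a b) \<le> sc2 (cycl n r \<mu>)"
proof (induction r arbitrary: n a b \<mu> rule: less_induct)
  case (less r)
  let ?F = "PS n {1..r} \<mu> a b"
  have nz: "\<forall>k. 1 \<le> k \<and> k \<le> r \<longrightarrow> \<mu> k \<noteq> 0" using less.prems(2) unfolding Cond_def by auto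
  have par: "even (sc2 (cycl n r \<mu>)) = even n" by (rule cycl_parity[OF nz]) (use less.prems in simp)
  have parZ: "even (Zinf n ?F + n)" by (rule Zinf_parity[OF less.prems(3) PS_degree])
  show ?case
  proof (cases "sc2 (cycl n r \<mu>) = 0")
    case True
    from cycl_zero[OF nz _ True] less.prems have "even n \<and> (\<forall>k. 1 \<le> k \<and> k \<le> r \<longrightarrow> 0 < \<mu> 1 * \<mu> k)" by simp
    then have "Zinf n ?F = 0" using POS[OF less.prems(2,1)] by simp
    then show ?thesis by simp
  next
    case s1: False
    show ?thesis
    proof (cases "n = 0")
      case True then show ?thesis using Zinf_le[OF less.prems(3) PS_degree] by simp
    next
      case n0: False
      show ?thesis
      proof (cases "r = 2")
        case True
        have "Zinf n ?F \<le> 2" using base2[of a b \<mu> n] less.prems n0 True by simp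
        then show ?thesis using par_d[OF parZ par s1] by simp
      next
        case r3: False
        obtain j where j: "2 \<le> j" "j \<le> r" "\<mu> (j - 1) * \<mu> j < 0 \<or>
              \<mu> j * (if j < r then \<mu> (j + 1) else (-1) ^ n * \<mu> 1) < 0"
          using cycl_good_ex[OF less.prems(1), of n \<mu>] s1 by auto
        obtain \<alpha> \<beta> \<gamma> \<delta> \<nu> a'' b'' where E: "\<alpha> * \<delta> - \<beta> * \<gamma> \<noteq> 0" "Cond (r - 1) a'' b'' \<nu>"
          "pderiv (Sub \<alpha> \<beta> \<gamma> \<delta> n ?F) = PS (n - 1) {1..r - 1} \<nu> a'' b''"
          "\<forall>k. 1 \<le> k \<and> k < j \<longrightarrow> \<nu> k * \<mu> k < 0" "\<forall>k. j \<le> k \<and> k < r \<longrightarrow> 0 < \<nu> k * \<mu> (k + 1)"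
          using elim[OF less.prems(2,1) _ j(2), of n] j n0 by auto
        let ?G = "Sub \<alpha> \<beta> \<gamma> \<delta> n ?F"
        let ?H = "PS (n - 1) {1..r - 1} \<nu> a'' b''"
        have el: "sc2 (cycl (n - 1) (r - 1) \<nu>) \<le> sc2 (cycl n r \<mu>)"
          by (rule cycl_elim[OF j(1,2) _ nz]) (use n0 E(4,5) j(3) in auto)
        have G0: "?G \<noteq> 0" by (rule Sub_nonzero[OF E(1) less.prems(3) PS_degree])
        have le1: "Zinf n ?F \<le> Zinf n ?G" by (rule Zinf_Sub[OF E(1) less.prems(3) PS_degree])
        show ?thesis
        proof (cases "?H = 0")
          case True
          have "n - 1 + 2 \<le> sc2 (cycl (n - 1) (r - 1) \<nu>)"
            by (rule ZL[OF _ E(2) True]) (use less.prems in simp)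
          moreover have "Zinf n ?F \<le> n" by (rule Zinf_le[OF less.prems(3) PS_degree])
          ultimately show ?thesis using el n0 by simp
        next
          case H0: False
          have ih: "Zinf (n - 1) ?H \<le> sc2 (cycl (n - 1) (r - 1) \<nu>)"
            by (rule less.IH[OF _ _ E(2) H0]) (use less.prems r3 in auto)
          have "Zinf n ?G \<le> Zinf (n - 1) (pderiv ?G) + 1"
            by (rule rolle_Zinf[OF G0 Sub_degree]) (use E(3) H0 in simp)
          then have "Zinf n ?F \<le> sc2 (cycl n r \<mu>) + 1" using le1 ih el E(3) by simp
          then show ?thesis using par_c[OF parZ par] by simp
        qed
      qed
    qed
  qed
qed



lemma theta_mono:
  fixes \<theta> :: "nat \<Rightarrow> real"
  assumes "\<forall>k. 1 \<le> k \<and> k < r \<longrightarrow> \<theta> k < \<theta> (Suc k)"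
  shows "1 \<le> i \<Longrightarrow> i < k \<Longrightarrow> k \<le> r \<Longrightarrow> \<theta> i < \<theta> k"
proof (induction k)
  case 0 then show ?case by simp
next
  case (Suc k)
  show ?case
  proof (cases "i = k")
    case True then show ?thesis using assms Suc.prems by auto
  next
    case False
    then have "\<theta> i < \<theta> k" using Suc by auto
    also have "\<theta> k < \<theta> (Suc k)" using assms Suc.prems False by auto
    finally show ?thesis .
  qed
qed

lemma binform_poly:
  "poly (\<Sum>i\<le>d. monom (c i) i) t = binform d c t 1"
  unfolding binform_def by (simp add: poly_sum poly_monom)

lemma binform_poly_degree: "degree (\<Sum>i\<le>d. monom (c i) i) \<le> d"
  by (rule degree_sum_le) (auto intro: order.trans[OF degree_monom_le])

lemma binform_poly_coeff: "coeff (\<Sum>i\<le>d. monom (c i) i) j = (if j \<le> d then c j else 0)"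
  by (simp add: coeff_sum coeff_monom)

theorem corollary2p5:
  fixes d r :: nat and p :: "real \<Rightarrow> real \<Rightarrow> real"
    and lam \<theta> :: "nat \<Rightarrow> real" and \<tau> :: nat
  assumes "d \<ge> 1"
    and "is_binary_form d p"
    and "p \<noteq> (\<lambda>x y. 0)"
    and "\<tau> = num_real_lin_factors d p"
    and "r \<ge> 2"
    and "\<forall>x y. p x y = (\<Sum>k=1..r. lam k * (cos (\<theta> k) * x - sin (\<theta> k) * y) ^ d)"
    and "- (pi / 2) < \<theta> 1"
    and "\<forall>k. 1 \<le> k \<and> k < r \<longrightarrow> \<theta> k < \<theta> (Suc k)"
    and "\<theta> r \<le> pi / 2"
    and "\<forall>k. 1 \<le> k \<and> k \<le> r \<longrightarrow> lam k \<noteq> 0"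
  shows "\<tau> \<le> sign_changes (map lam [1..<r+1] @ [(-1) ^ d * lam 1])"
proof -
  from assms(2) obtain c where p: "p = binform d c" unfolding is_binary_form_def by auto
  define f where "f = (\<Sum>i\<le>d. monom (c i) i)"
  have pf: "poly f t = p t 1" for t unfolding f_def p by (rule binform_poly)
  have degf: "degree f \<le> d" unfolding f_def by (rule binform_poly_degree)
  have f0: "f \<noteq> 0"
  proof
    assume "f = 0"
    then have "c i = 0" if "i \<le> d" for i
      using binform_poly_coeff[where d=d and c=c and j=i] that unfolding f_def by simp
    then have "p = (\<lambda>x y. 0)" unfolding p binform_def by (intro ext) simp
    then show False using assms(3) by simp
  qed
  have key: "k \<le> Zinf d f" if hk: "has_lin_factors d p k" for k
  proof -
    from hk obtain a b g where kd: "k \<le> d" and ab: "\<forall>i<k. a i \<noteq> 0 \<or> b i \<noteq> 0"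
      and g: "is_binary_form (d - k) g" and fac: "\<forall>x y. p x y = (\<Prod>i<k. a i * x + b i * y) * g x y"
      unfolding has_lin_factors_def by blast
    from g obtain c' where g': "g = binform (d - k) c'" unfolding is_binary_form_def by auto
    define g1 where "g1 = (\<Sum>i\<le>d - k. monom (c' i) i)"
    have pg: "poly g1 t = g t 1" for t unfolding g1_def g' by (rule binform_poly)
    have dg: "degree g1 \<le> d - k" unfolding g1_def by (rule binform_poly_degree)
    have feq: "f = (\<Prod>i<k. [:b i, a i:]) * g1"
    proof -
      have "poly f t = poly ((\<Prod>i<k. [:b i, a i:]) * g1) t" for t
        using fac pf pg by (simp add: poly_prod algebra_simps)
      then show ?thesis by (simp add: poly_eq_poly_eq_iff[symmetric] fun_eq_iff)
    qed
    show ?thesis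
    proof (rule FL_le[OF f0 feq _ dg kd])
      fix i assume "i < k"
      then show "[:b i, a i:] \<noteq> 0 \<and> degree [:b i, a i:] \<le> 1" using ab by auto
    qed
  qed
  have h0: "has_lin_factors d p 0"
    unfolding has_lin_factors_def using assms(2) by auto
  have hG: "has_lin_factors d p \<tau>"
    unfolding assms(4) num_real_lin_factors_def
    by (rule GreatestI_nat[of "has_lin_factors d p" 0 d, OF h0]) (simp add: has_lin_factors_def)
  have t1: "\<tau> \<le> Zinf d f" using key[OF hG] .
  define a where "a = (\<lambda>k. cos (\<theta> k))"
  define b where "b = (\<lambda>k. - sin (\<theta> k))"
  have fPS: "f = PS d {1..r} lam a b"
  proof -
    have "poly f t = poly (PS d {1..r} lam a b) t" for t
      using pf assms(6) unfolding poly_PS a_def b_def by (simp add: algebra_simps)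
    then show ?thesis by (simp add: poly_eq_poly_eq_iff[symmetric] fun_eq_iff)
  qed
  have cond: "Cond r a b lam"
    unfolding Cond_def
  proof (intro conjI allI impI)
    fix k assume k: "1 \<le> k \<and> k \<le> r"
    show "lam k \<noteq> 0" using assms(10) k by auto
    show "a k \<noteq> 0 \<or> b k \<noteq> 0"
    proof (rule ccontr)
      assume "\<not> (a k \<noteq> 0 \<or> b k \<noteq> 0)"
      then have "cos (\<theta> k) = 0" "sin (\<theta> k) = 0" unfolding a_def b_def by auto
      then show False using sin_cos_squared_add[of "\<theta> k"] by simp
    qed
  next
    fix i k assume ik: "1 \<le> i \<and> i < k \<and> k \<le> r"
    have lt: "\<theta> i < \<theta> k" using theta_mono[OF assms(8)] ik by auto
    have t1: "\<theta> 1 \<le> \<theta> i" using theta_mono[OF assms(8), of 1 i] ik by (cases "i = 1") auto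
    have tr: "\<theta> k \<le> \<theta> r" using theta_mono[OF assms(8), of k r] ik by (cases "k = r") auto
    have "0 < sin (\<theta> k - \<theta> i)"
      by (rule sin_gt_zero) (use lt t1 tr assms(7,9) in auto)
    moreover have "cr a b i k = - sin (\<theta> k - \<theta> i)"
      unfolding cr_def a_def b_def by (simp add: sin_diff algebra_simps)
    ultimately show "cr a b i k < 0" by simp
  qed
  have "Zinf d f \<le> sc2 (cycl d r lam)"
    unfolding fPS by (rule MAIN[OF assms(5) cond]) (use f0 fPS in simp)
  moreover have "sign_changes (map lam [1..<r+1] @ [(-1) ^ d * lam 1]) = sc2 (cycl d r lam)"
    unfolding cycl_def[symmetric]
    by (rule sign_changes_sc2[OF cycl_nz]) (use assms(5,10) in auto)
  ultimately show ?thesis using t1 by simp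
qed


end
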